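(* Let $P$ be a finite poset and fix a real number $q\geq 0$. For $p\in P$ let $T_p^q\colon \mathcal{J}(P)\to\mathbb{R}$ be the statistic $T_p^q\coloneqq T_p^+-q\,T_p^-$. Then the statistics $T_p^q$ ($p\in P$) are linearly independent over $\mathbb{R}$, and they are also linearly independent from the constant function $1$ (i.e., $1\notin\operatorname{span}_{\mathbb{R}}\{T_p^q\colon p\in P\}$).
   Context: $\mathcal{J}(P)$ denotes the set of order ideals (downward-closed subsets) of $P$. For $p\in P$ and $I\in\mathcal{J}(P)$: $T_p^+(I)=1$ if $p$ is a minimal element of $P\setminus I$ and $0$ otherwise; $T_p^-(I)=1$ if $p$ is a maximal element of $I$ and $0$ otherwise. *)

theory Defs
  imports Complex_Main
begin

text \<open>A finite poset is represented by a finite carrier set P of a type with a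
partial order; the poset structure is the restriction of that order to P.\<close>

definition order_ideals :: "'a::order set \<Rightarrow> 'a set set" where
  "order_ideals P = {I. I \<subseteq> P \<and> (\<forall>x\<in>I. \<forall>y\<in>P. y \<le> x \<longrightarrow> y \<in> I)}"

definition T_plus :: "'a::order set \<Rightarrow> 'a \<Rightarrow> 'a set \<Rightarrow> real" where
  "T_plus P p I = (if p \<in> P - I \<and> (\<forall>y\<in>P - I. y \<le> p \<longrightarrow> y = p) then 1 else 0)"

definition T_minus :: "'a::order set \<Rightarrow> 'a \<Rightarrow> 'a set \<Rightarrow> real" where
  "T_minus P p I = (if p \<in> I \<and> (\<forall>y\<in>I. p \<le> y \<longrightarrow> y = p) then 1 else 0)"

definition T_q :: "'a::order set \<Rightarrow> real \<Rightarrow> 'a \<Rightarrow> 'a set \<Rightarrow> real" where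
  "T_q P q p I = T_plus P p I - q * T_minus P p I"

end

theory Submission
  imports Defs
begin

lemma ideals_finite: "finite P \<Longrightarrow> finite (order_ideals P)"
  by (rule finite_subset[of _ "Pow P"]) (auto simp: order_ideals_def)

lemma ideal_finite: "finite P \<Longrightarrow> I \<in> order_ideals P \<Longrightarrow> finite I"
  by (auto simp: order_ideals_def intro: finite_subset)

lemma key_bal:
  fixes P :: "'a::order set" and q :: real
  assumes fin: "finite P" and qpos: "q > 0"
  shows "(\<Sum>I\<in>order_ideals P. (1/q)^card I * T_q P q p I) = 0"
proof -
  define w where "w I = (1/q)^card I" for I :: "'a set"
  define A where "A = {I\<in>order_ideals P. p \<in> P - I \<and> (\<forall>y\<in>P - I. y \<le> p \<longrightarrow> y = p)}"
  define B where "B = {J\<in>order_ideals P. p \<in> J \<and> (\<forall>y\<in>J. p \<le> y \<longrightarrow> y = p)}"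
  have fJ: "finite (order_ideals P)" using fin by (rule ideals_finite)
  have s1: "(\<Sum>I\<in>order_ideals P. w I * T_plus P p I) = (\<Sum>I\<in>A. w I)"
    unfolding A_def T_plus_def using fJ by (auto simp: sum.inter_filter intro!: sum.cong)
  have s2: "(\<Sum>I\<in>order_ideals P. w I * T_minus P p I) = (\<Sum>I\<in>B. w I)"
    unfolding B_def T_minus_def using fJ by (auto simp: sum.inter_filter intro!: sum.cong)
  have bij: "bij_betw (insert p) A B"
  proof (rule bij_betw_byWitness[where f'="\<lambda>J. J - {p}"])
    show "\<forall>a\<in>A. insert p a - {p} = a" unfolding A_def by auto
    show "\<forall>a'\<in>B. insert p (a' - {p}) = a'" unfolding B_def by auto
    show "insert p ` A \<subseteq> B"
    proof
      fix J assume "J \<in> insert p ` A"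
      then obtain I where I: "I \<in> A" and J: "J = insert p I" by auto
      have Iid: "I \<subseteq> P" "\<And>x y. x \<in> I \<Longrightarrow> y \<in> P \<Longrightarrow> y \<le> x \<Longrightarrow> y \<in> I"
        using I unfolding A_def order_ideals_def by auto
      have pP: "p \<in> P" "p \<notin> I" and mn: "\<And>y. y \<in> P - I \<Longrightarrow> y \<le> p \<Longrightarrow> y = p"
        using I unfolding A_def by auto
      have "J \<in> order_ideals P"
        unfolding order_ideals_def J using Iid pP mn by (auto)
      moreover have "\<forall>y\<in>J. p \<le> y \<longrightarrow> y = p"
        using Iid pP J by auto
      ultimately show "J \<in> B" unfolding B_def J by auto
    qed
    show "(\<lambda>J. J - {p}) ` B \<subseteq> A"
    proof
      fix I assume "I \<in> (\<lambda>J. J - {p}) ` B"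
      then obtain J where J: "J \<in> B" and I: "I = J - {p}" by auto
      have Jid: "J \<subseteq> P" "\<And>x y. x \<in> J \<Longrightarrow> y \<in> P \<Longrightarrow> y \<le> x \<Longrightarrow> y \<in> J"
        using J unfolding B_def order_ideals_def by auto
      have pJ: "p \<in> J" and mx: "\<And>y. y \<in> J \<Longrightarrow> p \<le> y \<Longrightarrow> y = p"
        using J unfolding B_def by auto
      have "I \<in> order_ideals P"
        unfolding order_ideals_def I using Jid pJ mx by auto
      moreover have "p \<in> P - I" using pJ Jid I by auto
      moreover have "\<forall>y\<in>P - I. y \<le> p \<longrightarrow> y = p" using Jid pJ I by auto
      ultimately show "I \<in> A" unfolding A_def by auto
    qed
  qed
  have wins: "w I = q * w (insert p I)" if "I \<in> A" for I
  proof -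
    have "finite I" "p \<notin> I" using that fin unfolding A_def order_ideals_def
      by (auto intro: finite_subset)
    then show ?thesis unfolding w_def using qpos by simp
  qed
  have "(\<Sum>I\<in>A. w I) = (\<Sum>I\<in>A. q * w (insert p I))" using wins by (rule sum.cong[OF refl])
  also have "\<dots> = q * (\<Sum>I\<in>A. w (insert p I))" by (simp add: sum_distrib_left)
  also have "\<dots> = q * (\<Sum>J\<in>B. w J)" using sum.reindex_bij_betw[OF bij, of w] by simp
  finally have eq: "(\<Sum>I\<in>A. w I) = q * (\<Sum>J\<in>B. w J)" .
  have "(\<Sum>I\<in>order_ideals P. w I * T_q P q p I)
      = (\<Sum>I\<in>order_ideals P. w I * T_plus P p I) - q * (\<Sum>I\<in>order_ideals P. w I * T_minus P p I)"
    unfolding T_q_def by (simp add: algebra_simps sum_subtractf sum_distrib_left)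
  also have "\<dots> = 0" using s1 s2 eq by simp
  finally show ?thesis unfolding w_def .
qed

lemma weighted_zero:
  fixes P :: "'a::order set" and q :: real
  assumes fin: "finite P" and qpos: "q > 0"
  shows "(\<Sum>I\<in>order_ideals P. (1/q)^card I * (\<Sum>p\<in>P. c p * T_q P q p I)) = 0"
proof -
  have "(\<Sum>I\<in>order_ideals P. (1/q)^card I * (\<Sum>p\<in>P. c p * T_q P q p I))
     = (\<Sum>p\<in>P. c p * (\<Sum>I\<in>order_ideals P. (1/q)^card I * T_q P q p I))"
    by (simp add: sum_distrib_left sum.swap[of _ P] algebra_simps)
  also have "\<dots> = 0" using key_bal[OF fin qpos] by simp
  finally show ?thesis .
qed

lemma indep_pos:
  fixes P :: "'a::order set" and q :: real
  assumes fin: "finite P" and qpos: "q > 0"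
  shows "\<forall>c. (\<forall>I\<in>order_ideals P. (\<Sum>p\<in>P. c p * T_q P q p I) = 0) \<longrightarrow> (\<forall>p\<in>P. c p = 0)"
  using fin
proof (induction P rule: finite_psubset_induct)
  case (psubset P)
  show ?case
  proof (intro allI impI)
    fix c :: "'a \<Rightarrow> real"
    assume h: "\<forall>I\<in>order_ideals P. (\<Sum>p\<in>P. c p * T_q P q p I) = 0"
    show "\<forall>p\<in>P. c p = 0"
    proof (cases "P = {}")
      case True then show ?thesis by simp
    next
      case False
      then obtain m where mP: "m \<in> P" and mmax: "\<And>b. b \<in> P \<Longrightarrow> m \<le> b \<Longrightarrow> m = b"
        using finite_has_maximal[OF psubset.hyps] by blast
      define P' where "P' = P - {m}"
      have finP': "finite P'" using psubset.hyps unfolding P'_def by simp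
      have sub: "order_ideals P' \<subseteq> order_ideals P"
        unfolding order_ideals_def P'_def
      proof (safe)
        fix I x y assume "I \<subseteq> P - {m}" "\<forall>x\<in>I. \<forall>y\<in>P - {m}. y \<le> x \<longrightarrow> y \<in> I"
          "x \<in> I" "y \<in> P" "y \<le> x"
        then show "y \<in> I" using mmax by (metis Diff_iff insertI1 singletonD subsetD)
      qed auto
      have mI: "m \<notin> I" if "I \<in> order_ideals P'" for I
        using that unfolding order_ideals_def P'_def by auto
      have Teq: "T_q P q p I = T_q P' q p I" if "I \<in> order_ideals P'" "p \<in> P'" for I p
      proof -
        have "m \<notin> I" using mI that(1) .
        have "p \<noteq> m" "p \<in> P" using that(2) unfolding P'_def by auto
        have "\<not> m \<le> p" using mmax \<open>p \<noteq> m\<close> \<open>p \<in> P\<close> by metis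
        have "T_plus P p I = T_plus P' p I"
          unfolding T_plus_def P'_def using \<open>\<not> m \<le> p\<close> \<open>p \<noteq> m\<close> by (auto; metis)
        moreover have "T_minus P p I = T_minus P' p I" unfolding T_minus_def by simp
        ultimately show ?thesis unfolding T_q_def by simp
      qed
      define I0 where "I0 = {y\<in>P. y < m}"
      have I0: "I0 \<in> order_ideals P'"
        unfolding I0_def order_ideals_def P'_def by auto
      have Tm_nn: "0 \<le> (1/q)^card I * T_q P q m I" if "I \<in> order_ideals P'" for I
        using mI[OF that] qpos unfolding T_q_def T_plus_def T_minus_def by simp
      have Tm0: "T_q P q m I0 = 1"
        unfolding T_q_def T_plus_def T_minus_def I0_def using mP
        by (auto simp: less_le)
      have Spos: "0 < (\<Sum>I\<in>order_ideals P'. (1/q)^card I * T_q P q m I)"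
        by (rule sum_pos2[OF ideals_finite[OF finP'] I0]) (use Tm0 qpos Tm_nn in auto)
      have "0 = (\<Sum>I\<in>order_ideals P'. (1/q)^card I * (\<Sum>p\<in>P. c p * T_q P q p I))"
        using h sub by (auto intro!: sum.neutral)
      also have "\<dots> = (\<Sum>I\<in>order_ideals P'. (1/q)^card I * (c m * T_q P q m I + (\<Sum>p\<in>P'. c p * T_q P' q p I)))"
        apply (rule sum.cong[OF refl])
        apply (subst sum.remove[OF psubset.hyps mP])
        using Teq unfolding P'_def by simp
      also have "\<dots> = c m * (\<Sum>I\<in>order_ideals P'. (1/q)^card I * T_q P q m I)
          + (\<Sum>I\<in>order_ideals P'. (1/q)^card I * (\<Sum>p\<in>P'. c p * T_q P' q p I))"
        by (simp add: algebra_simps sum.distrib sum_distrib_left)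
      also have "\<dots> = c m * (\<Sum>I\<in>order_ideals P'. (1/q)^card I * T_q P q m I)"
        using weighted_zero[OF finP' qpos] by simp
      finally have cm: "c m = 0" using Spos by simp
      have "P' \<subset> P" using mP unfolding P'_def by auto
      from psubset.IH[OF this] have IH': "(\<forall>I\<in>order_ideals P'. (\<Sum>p\<in>P'. c p * T_q P' q p I) = 0) \<longrightarrow> (\<forall>p\<in>P'. c p = 0)"
        by blast
      have "\<forall>I\<in>order_ideals P'. (\<Sum>p\<in>P'. c p * T_q P' q p I) = 0"
      proof
        fix I assume I: "I \<in> order_ideals P'"
        have "(\<Sum>p\<in>P'. c p * T_q P' q p I) = (\<Sum>p\<in>P'. c p * T_q P q p I)"
          using Teq[OF I] by simp
        also have "\<dots> = (\<Sum>p\<in>P. c p * T_q P q p I)"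
          using sum.remove[OF psubset.hyps mP, of "\<lambda>p. c p * T_q P q p I"] cm unfolding P'_def by simp
        also have "\<dots> = 0" using h sub I by auto
        finally show "(\<Sum>p\<in>P'. c p * T_q P' q p I) = 0" .
      qed
      with IH' cm show ?thesis unfolding P'_def by auto
    qed
  qed
qed

lemma indep_zero:
  fixes P :: "'a::order set"
  assumes fin: "finite P"
  shows "\<forall>c. (\<forall>I\<in>order_ideals P. (\<Sum>p\<in>P. c p * T_q P 0 p I) = 0) \<longrightarrow> (\<forall>p\<in>P. c p = 0)"
proof (intro allI impI ballI)
  fix c :: "'a \<Rightarrow> real" and p assume h: "\<forall>I\<in>order_ideals P. (\<Sum>p\<in>P. c p * T_q P 0 p I) = 0"
    and pP: "p \<in> P"
  define I where "I = {y\<in>P. \<not> p \<le> y}"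
  have I: "I \<in> order_ideals P" unfolding I_def order_ideals_def using order_trans by blast
  have T: "T_q P 0 p' I = (if p' = p then 1 else 0)" if "p' \<in> P" for p'
    unfolding T_q_def T_plus_def I_def using that pP by (auto dest: antisym)
  have "(\<Sum>p'\<in>P. c p' * T_q P 0 p' I) = (\<Sum>p'\<in>P. if p' = p then c p' else 0)"
    by (rule sum.cong) (auto simp: T)
  also have "\<dots> = c p" using pP fin by (simp add: sum.delta')
  finally show "c p = 0" using h I by simp
qed

theorem theorem2p7:
  fixes P :: "'a::order set" and q :: real
  assumes "finite P" and "q \<ge> 0"
  shows "(\<forall>c :: 'a \<Rightarrow> real.
            (\<forall>I\<in>order_ideals P. (\<Sum>p\<in>P. c p * T_q P q p I) = 0) \<longrightarrow> (\<forall>p\<in>P. c p = 0))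
       \<and> \<not> (\<exists>c :: 'a \<Rightarrow> real. \<forall>I\<in>order_ideals P. (\<Sum>p\<in>P. c p * T_q P q p I) = 1)"
proof (cases "q = 0")
  case True
  have "P \<in> order_ideals P" unfolding order_ideals_def by auto
  moreover have "T_q P 0 p P = 0" for p unfolding T_q_def T_plus_def by simp
  ultimately have "\<not> (\<exists>c :: 'a \<Rightarrow> real. \<forall>I\<in>order_ideals P. (\<Sum>p\<in>P. c p * T_q P 0 p I) = 1)"
    by force
  with indep_zero[OF assms(1)] True show ?thesis by simp
next
  case False
  then have qpos: "q > 0" using assms(2) by simp
  have "\<not> (\<exists>c :: 'a \<Rightarrow> real. \<forall>I\<in>order_ideals P. (\<Sum>p\<in>P. c p * T_q P q p I) = 1)"
  proof
    assume "\<exists>c :: 'a \<Rightarrow> real. \<forall>I\<in>order_ideals P. (\<Sum>p\<in>P. c p * T_q P q p I) = 1"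
    then obtain c :: "'a \<Rightarrow> real" where c: "\<forall>I\<in>order_ideals P. (\<Sum>p\<in>P. c p * T_q P q p I) = 1" by blast
    have "{} \<in> order_ideals P" unfolding order_ideals_def by auto
    have "0 < (\<Sum>I\<in>order_ideals P. (1/q)^card I * (\<Sum>p\<in>P. c p * T_q P q p I))"
      by (rule sum_pos2[OF ideals_finite[OF assms(1)] \<open>{} \<in> order_ideals P\<close>]) (use c qpos \<open>{} \<in> order_ideals P\<close> in auto)
    then show False using weighted_zero[OF assms(1) qpos, of c] by simp
  qed
  with indep_pos[OF assms(1) qpos] show ?thesis by simp
qed

end
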